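(* Let $V,c_1,c_2,K,V',c'_\lambda$ be as follows: $V$ is a finite-dimensional complex vector space; $c_1,c_2\in\wedge^2V$ with $c_\lambda=\lambda_1c_1+\lambda_2c_2$ nondegenerate for generic $\lambda$; $K\subset V$ is a subspace; and the images $c'_i$ of $c_i$ in $\wedge^2(V/K)$ are linearly independent, with $c'_\lambda=\lambda_1c_1'+\lambda_2c_2'$. Let $\Lambda_1=\mathbb C\hat\lambda_1,\dots,\Lambda_s=\mathbb C\hat\lambda_s$ be the complex lines in $\mathbb C^2$ on which $c_\lambda$ is degenerate, and let $\Lambda=\bigcup_i\Lambda_i$. Assume $K^\perp\cap\ker c^\sharp_{\hat\lambda_i}=\{0\}$ for $i=1,\dots,s$. Set $k_\lambda=\dim\bigl(K\cap c_\lambda^\sharp(K^\perp)\bigr)$. Then $k_\lambda=\operatorname{codim}P_{c'_\lambda}$ in $V/K$ for every $\lambda\ne0$, where $P_{c'_\lambda}=\operatorname{im}(c'_\lambda)^\sharp$. Consequently, $\operatorname{rank}c'_\lambda=\max_\mu\operatorname{rank}c'_\mu$ for all $\lambda\in\mathbb C^2\setminus\{0\}$ if and only if: (i) $k_\lambda=k$ is constant on $\mathbb C^2\setminus\Lambda$; and (ii) $k_{\hat\lambda_1}=\dots=k_{\hat\lambda_s}=k$.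
   Context: $K^\perp\subset V^*$ denotes the annihilator of $K$. $b^\sharp:V^*\to V$ is contraction in the first argument, and $\ker b^\sharp$ is its kernel. *)

theory Defs
  imports "HOL-Analysis.Analysis"
begin

text \<open>V is realised as complex^'n, its dual V* also as complex^'n via the
  standard (bilinear) pairing.  A bivector c in wedge^2 V is represented by its
  skew-symmetric coefficient matrix C, c = (1/2) sum_ij C_ij e_i wedge e_j.\<close>

definition dpair :: "complex^'n \<Rightarrow> complex^'n \<Rightarrow> complex" where
  "dpair \<xi> v = (\<Sum>i\<in>UNIV. \<xi>$i * v$i)"

definition bivector :: "complex^'n^'n \<Rightarrow> bool" where
  "bivector C \<longleftrightarrow> transpose C = - C"

definition sharp :: "complex^'n^'n \<Rightarrow> complex^'n \<Rightarrow> complex^'n" where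
  "sharp C \<xi> = \<xi> v* C"

definition nondeg :: "complex^'n^'n \<Rightarrow> bool" where
  "nondeg C \<longleftrightarrow> (\<forall>\<xi>. sharp C \<xi> = 0 \<longrightarrow> \<xi> = 0)"

definition annih :: "(complex^'n) set \<Rightarrow> (complex^'n) set" where
  "annih K = {\<xi>. \<forall>v\<in>K. dpair \<xi> v = 0}"

definition comb :: "complex^'n^'n \<Rightarrow> complex^'n^'n \<Rightarrow> complex^2 \<Rightarrow> complex^'n^'n" where
  "comb C1 C2 l = (\<chi> i j. l$1 * C1$i$j + l$2 * C2$i$j)"

definition kdim :: "complex^'n^'n \<Rightarrow> complex^'n^'n \<Rightarrow> (complex^'n) set \<Rightarrow> complex^2 \<Rightarrow> nat" where
  "kdim C1 C2 K l = vec.dim (K \<inter> sharp (comb C1 C2 l) ` annih K)"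

text \<open>Image of a bivector under a linear map q (matrix Q): wedge^2 q.\<close>
definition push :: "complex^'n^'m \<Rightarrow> complex^'n^'n \<Rightarrow> complex^'m^'m" where
  "push Q C = Q ** C ** transpose Q"

definition Pc :: "complex^'m^'m \<Rightarrow> (complex^'m) set" where
  "Pc C = range (sharp C)"

definition brank :: "complex^'m^'m \<Rightarrow> nat" where
  "brank C = vec.dim (Pc C)"

end

theory Submission
  imports Defs
begin

lemma rn:
  fixes Q :: "'a::field^'n^'m" and W :: "('a^'n) set"
  assumes W: "vec.subspace W"
  shows "vec.dim ((*v) Q ` W) + vec.dim (W \<inter> {v. Q *v v = 0}) = vec.dim W"
proof -
  let ?N = "W \<inter> {v. Q *v v = 0}"
  have subN: "vec.subspace ?N"
    by (intro vec.subspace_inter W) (simp add: vec.subspace_kernel)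
  obtain B0 where B0: "B0 \<subseteq> ?N" "vec.independent B0" "?N \<subseteq> vec.span B0" "card B0 = vec.dim ?N"
    using vec.basis_exists by blast
  obtain B where B: "B0 \<subseteq> B" "B \<subseteq> W" "vec.independent B" "W \<subseteq> vec.span B"
    using vec.maximal_independent_subset_extend[of B0 W] B0 by blast
  have finB: "finite B" using B(3) vec.finiteI_independent by blast
  define B1 where "B1 = B - B0"
  have ind1: "vec.independent B1" using B(3) vec.independent_mono B1_def by blast
  have spanB: "vec.span B = W" using B vec.span_minimal[OF B(2) W] by blast
  have span0: "vec.span B0 = ?N" using B0 vec.span_minimal[OF B0(1) subN] by blast
  have span1: "vec.span B1 \<subseteq> W" using vec.span_minimal[of B1 W] W B(2) B1_def by blast
  have cardB: "card B = card B0 + card B1"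
    using finB B(1) B1_def by (metis card_Diff_subset card_mono finite_subset le_add_diff_inverse)
  have dimW: "vec.dim W = card B"
    using vec.dim_unique[OF B(2) B(4) B(3) refl] .
  have "vec.dim {x + y |x y. x \<in> vec.span B0 \<and> y \<in> vec.span B1} + vec.dim (vec.span B0 \<inter> vec.span B1)
      = vec.dim (vec.span B0) + vec.dim (vec.span B1)"
    by (rule vec.dim_sums_Int[OF vec.subspace_span vec.subspace_span])
  moreover have "{x + y |x y. x \<in> vec.span B0 \<and> y \<in> vec.span B1} = vec.span B"
  proof -
    have "B0 \<union> B1 = B" using B(1) B1_def by blast
    then show ?thesis by (simp add: vec.span_Un[symmetric])
  qed
  moreover have "vec.dim B0 = card B0" "vec.dim B1 = card B1"
    using vec.dim_eq_card_independent B0(2) ind1 by auto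
  ultimately have "vec.dim (vec.span B0 \<inter> vec.span B1) = 0"
    using cardB dimW spanB by simp
  then have int0: "vec.span B0 \<inter> vec.span B1 \<subseteq> {0}" by simp
  have inj: "inj_on ((*v) Q) (vec.span B1)"
  proof (subst vec.inj_on_iff_eq_0)
    show "vec.subspace (vec.span B1)" by simp
    show "\<forall>x\<in>vec.span B1. Q *v x = 0 \<longrightarrow> x = 0"
      using span1 span0 int0 by blast
  qed
  have d1: "vec.dim ((*v) Q ` B1) = card B1"
    using vec.dim_image_eq[OF _ inj] ind1 vec.dim_eq_card_independent by auto
  have i1: "(*v) Q ` B1 \<subseteq> (*v) Q ` W" using B(2) B1_def by blast
  have i2: "(*v) Q ` W \<subseteq> vec.span ((*v) Q ` B1)"
    proof
      fix w assume "w \<in> (*v) Q ` W"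
      then obtain x where x: "x \<in> W" "w = Q *v x" by blast
      moreover have "B0 \<union> B1 = B" using B(1) B1_def by blast
      ultimately have "x \<in> vec.span (B0 \<union> B1)" using spanB by simp
      then obtain a b where ab: "a \<in> vec.span B0" "b \<in> vec.span B1" "x = a + b"
        using vec.span_Un by blast
      have "Q *v a = 0" using ab(1) span0 by blast
      then have "w = Q *v b" using x ab by (simp add: matrix_vector_right_distrib)
      then show "w \<in> vec.span ((*v) Q ` B1)"
        using ab(2) vec.linear_span_image[OF matrix_vector_mul_linear_gen, of Q B1] by auto
    qed
  have "vec.dim ((*v) Q ` W) = vec.dim ((*v) Q ` B1)"
    using vec.subset_le_dim[OF i2] vec.dim_subset[OF i1] by linarith
  then show ?thesis using d1 B0(4) cardB dimW by simp
qed

lemma sharp_eq: "sharp C = (*v) (transpose C)"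
  by (simp add: sharp_def fun_eq_iff)


lemma push_comb: "comb (push Q A) (push Q B) l = push Q (comb A B l)"
  unfolding comb_def push_def
  by (simp add: vec_eq_iff matrix_matrix_mult_def transpose_def distrib_left distrib_right
      sum.distrib sum_distrib_left sum_distrib_right mult_ac)

lemma sharp_push: "sharp (push Q C) \<eta> = Q *v sharp C (transpose Q *v \<eta>)"
  unfolding sharp_def push_def
  by (simp add: vector_matrix_mul_assoc[symmetric])

lemma dpair_transpose: "dpair (x v* A) y = dpair x (A *v y)"
  unfolding dpair_def
  apply (simp add: vector_matrix_mult_def matrix_vector_mult_def sum_distrib_left sum_distrib_right mult_ac)
  apply (rule sum.swap)
  done

lemma dpair_axis: "dpair \<xi> (axis i 1) = \<xi>$i"
proof -
  have "(\<lambda>j. \<xi>$j * axis i 1 $ j) = (\<lambda>j. if j = i then \<xi>$j else 0)"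
    by (auto simp: axis_def)
  then show ?thesis by (simp only: dpair_def) simp
qed

lemma dpair_diff: "dpair \<xi> (a - b) = dpair \<xi> a - dpair \<xi> b"
  by (simp add: dpair_def sum_subtractf right_diff_distrib)

lemma dpair_zero: "dpair \<xi> 0 = 0"
  by (simp add: dpair_def)

lemma annih_range:
  fixes Q :: "complex^'n^'m"
  assumes "surj ((*v) Q)" "{v. Q *v v = 0} = K"
  shows "annih K = range ((*v) (transpose Q))"
proof
  obtain R where R: "Q ** R = mat 1" using matrix_right_invertible_surjective assms(1) by blast
  show "range ((*v) (transpose Q)) \<subseteq> annih K"
    using assms(2) by (auto simp: annih_def dpair_transpose dpair_zero)
  show "annih K \<subseteq> range ((*v) (transpose Q))"
  proof
    fix \<xi> assume \<xi>: "\<xi> \<in> annih K"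
    have "\<And>v. dpair (transpose Q *v (transpose R *v \<xi>)) v = dpair \<xi> v"
    proof -
      fix v
      have "Q *v (v - R *v (Q *v v)) = 0"
        by (simp add: matrix_vector_mult_diff_distrib matrix_vector_mul_assoc matrix_mul_assoc R)
      then have "dpair \<xi> (v - R *v (Q *v v)) = 0" using \<xi> assms(2) by (auto simp: annih_def)
      then show "dpair (transpose Q *v (transpose R *v \<xi>)) v = dpair \<xi> v"
        by (simp add: dpair_transpose dpair_diff)
    qed
    then have "transpose Q *v (transpose R *v \<xi>) = \<xi>"
      unfolding vec_eq_iff by (metis dpair_axis)
    then show "\<xi> \<in> range ((*v) (transpose Q))" by (metis rangeI)
  qed
qed

lemma sharp_comb_scale: "sharp (comb C1 C2 (t *s x)) \<xi> = sharp (comb C1 C2 x) (t *s \<xi>)"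
  unfolding sharp_def comb_def
  by (simp add: vec_eq_iff vector_matrix_mult_def sum_distrib_left mult_ac distrib_left)

lemma sharp_comb_scale2: "sharp (comb C1 C2 (t *s x)) \<xi> = t *s sharp (comb C1 C2 x) \<xi>"
  by (simp only: sharp_comb_scale) (simp add: sharp_def scalar_vector_matrix_assoc)


theorem mainTheorem6:
  fixes C1 C2 :: "complex^'n^'n"
    and K :: "(complex^'n) set"
    and Q :: "complex^'n^'m"
    and lhat :: "nat \<Rightarrow> complex^2"
    and s :: nat
  assumes biv: "bivector C1" "bivector C2"
    and generic: "\<exists>l. nondeg (comb C1 C2 l)"
    and Ksub: "vec.subspace K"
    and Qsurj: "surj (\<lambda>v. Q *v v)"
    and Qker: "{v. Q *v v = 0} = K"
    and indep: "\<forall>l. comb (push Q C1) (push Q C2) l = 0 \<longrightarrow> l = 0"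
    and lhat_nz: "\<forall>i<s. lhat i \<noteq> 0"
    and lhat_dist: "\<forall>i<s. \<forall>j<s. i \<noteq> j \<longrightarrow> (\<forall>t. lhat j \<noteq> t *s lhat i)"
    and lines: "{l. \<not> nondeg (comb C1 C2 l)} = {t *s lhat i | t i. i < s}"
    and transv: "\<forall>i<s. annih K \<inter> {\<xi>. sharp (comb C1 C2 (lhat i)) \<xi> = 0} = {0}"
  shows "(\<forall>l. l \<noteq> 0 \<longrightarrow>
            kdim C1 C2 K l = CARD('m) - vec.dim (Pc (comb (push Q C1) (push Q C2) l)))
       \<and> ((\<forall>l. l \<noteq> 0 \<longrightarrow>
              brank (comb (push Q C1) (push Q C2) l)
              = Max (range (\<lambda>\<mu>. brank (comb (push Q C1) (push Q C2) \<mu>))))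
          \<longleftrightarrow>
          (\<exists>k. (\<forall>l. l \<notin> {t *s lhat i | t i. i < s} \<longrightarrow> kdim C1 C2 K l = k)
               \<and> (\<forall>i<s. kdim C1 C2 K (lhat i) = k)))"
proof -
  define A where "A = annih K"
  have Ar: "A = range ((*v) (transpose Q))"
    unfolding A_def using annih_range[OF _ Qker] Qsurj by simp
  have Asub: "vec.subspace A"
    unfolding Ar by (rule vec.linear_subspace_image[OF matrix_vector_mul_linear_gen vec.subspace_UNIV])
  obtain R where R: "Q ** R = mat 1" using matrix_right_invertible_surjective Qsurj by blast
  have injQT: "inj_on ((*v) (transpose Q)) (vec.span UNIV)"
  proof (rule inj_onI)
    fix x y assume "transpose Q *v x = transpose Q *v y"
    then have "transpose R *v (transpose Q *v x) = transpose R *v (transpose Q *v y)" by simp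
    then show "x = y"
      by (simp only: matrix_vector_mul_assoc matrix_transpose_mul[symmetric] R transpose_mat
          matrix_vector_mul_lid)
  qed
  have dimA: "vec.dim A = CARD('m)"
    unfolding Ar using vec.dim_image_eq[OF matrix_vector_mul_linear_gen injQT] vec_dim_card by simp
  have PcE: "Pc (comb (push Q C1) (push Q C2) l) = (*v) Q ` (sharp (comb C1 C2 l) ` A)" for l
    unfolding Pc_def push_comb Ar by (auto simp: sharp_push image_iff simp del: transpose_matrix_vector)
  have s0: "0 < s"
  proof -
    have "comb C1 C2 0 = 0" by (simp add: comb_def vec_eq_iff)
    moreover have "axis undefined (1::complex) \<noteq> (0::complex^'n)" by (simp add: axis_eq_0_iff)
    ultimately have "\<not> nondeg (comb C1 C2 0)" by (auto simp: nondeg_def sharp_def)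
    then have "(0::complex^2) \<in> {t *s lhat i | t i. i < s}" using lines by blast
    then show ?thesis by auto
  qed
  have kerA: "\<xi> = 0" if l: "l \<noteq> 0" and x: "\<xi> \<in> A" "sharp (comb C1 C2 l) \<xi> = 0" for l \<xi>
  proof (cases "nondeg (comb C1 C2 l)")
    case True then show ?thesis using x nondeg_def by blast
  next
    case False
    then obtain t i where ti: "i < s" "l = t *s lhat i" using lines by blast
    with l have "t \<noteq> 0" by auto
    with x ti have "sharp (comb C1 C2 (lhat i)) \<xi> = 0" by (simp add: sharp_comb_scale2)
    then show ?thesis using transv ti x A_def by blast
  qed
  have P1: "vec.dim (Pc (comb (push Q C1) (push Q C2) l)) + kdim C1 C2 K l = CARD('m)"
    if l: "l \<noteq> 0" for l
  proof -
    define W where "W = sharp (comb C1 C2 l) ` A"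
    have sh: "sharp (comb C1 C2 l) = (*v) (transpose (comb C1 C2 l))" by (rule sharp_eq)
    have Wsub: "vec.subspace W"
      unfolding W_def sh by (rule vec.linear_subspace_image[OF matrix_vector_mul_linear_gen Asub])
    have "inj_on (sharp (comb C1 C2 l)) A"
      unfolding sh
      using vec.inj_on_iff_eq_0[OF Asub] kerA[OF l] sh by metis
    then have "inj_on ((*v) (transpose (comb C1 C2 l))) (vec.span A)"
      using sh vec.span_eq_iff Asub by metis
    then have dW: "vec.dim W = CARD('m)"
      unfolding W_def sh using vec.dim_image_eq[OF matrix_vector_mul_linear_gen] dimA by metis
    have "vec.dim ((*v) Q ` W) + vec.dim (W \<inter> {v. Q *v v = 0}) = vec.dim W"
      by (rule rn[OF Wsub])
    then show ?thesis
      using dW PcE[of l] Qker unfolding kdim_def W_def[symmetric] A_def[symmetric]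
      by (simp add: Int_commute)
  qed
  have part1: "\<forall>l. l \<noteq> 0 \<longrightarrow>
            kdim C1 C2 K l = CARD('m) - vec.dim (Pc (comb (push Q C1) (push Q C2) l))"
    using P1 by (metis add_diff_cancel_left')
  have kscale: "kdim C1 C2 K (t *s x) = kdim C1 C2 K x" if t: "t \<noteq> 0" for t x
  proof -
    have "sharp (comb C1 C2 (t *s x)) ` A = sharp (comb C1 C2 x) ` A"
    proof
      show "sharp (comb C1 C2 (t *s x)) ` A \<subseteq> sharp (comb C1 C2 x) ` A"
        using vec.subspace_scale[OF Asub] by (auto simp: sharp_comb_scale)
      show "sharp (comb C1 C2 x) ` A \<subseteq> sharp (comb C1 C2 (t *s x)) ` A"
      proof
        fix y assume "y \<in> sharp (comb C1 C2 x) ` A"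
        then obtain \<xi> where "\<xi> \<in> A" "y = sharp (comb C1 C2 x) \<xi>" by blast
        moreover have "sharp (comb C1 C2 (t *s x)) (inverse t *s \<xi>) = sharp (comb C1 C2 x) \<xi>"
          using t by (simp add: sharp_comb_scale)
        moreover have "inverse t *s \<xi> \<in> A" using vec.subspace_scale[OF Asub] \<open>\<xi> \<in> A\<close> by blast
        ultimately show "y \<in> sharp (comb C1 C2 (t *s x)) ` A" by (metis image_eqI)
      qed
    qed
    then show ?thesis unfolding kdim_def A_def by simp
  qed
  define r where "r = (\<lambda>\<mu>. brank (comb (push Q C1) (push Q C2) \<mu>))"
  have r0: "r 0 = 0"
  proof -
    have "comb (push Q C1) (push Q C2) 0 = 0" by (simp add: comb_def vec_eq_iff)
    moreover have "Pc (0::complex^'m^'m) = {0}" by (auto simp: Pc_def sharp_def)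
    ultimately show ?thesis by (simp add: r_def brank_def)
  qed
  have rk: "r l = CARD('m) - kdim C1 C2 K l" if "l \<noteq> 0" for l
    using P1[OF that] unfolding r_def brank_def by simp
  obtain e :: "complex^2" where e: "e \<noteq> 0" using axis_eq_0_iff[of "1::2" "1::complex"] by blast
  have part2: "(\<forall>l. l \<noteq> 0 \<longrightarrow> r l = Max (range r)) \<longleftrightarrow>
          (\<exists>k. (\<forall>l. l \<notin> {t *s lhat i | t i. i < s} \<longrightarrow> kdim C1 C2 K l = k)
               \<and> (\<forall>i<s. kdim C1 C2 K (lhat i) = k))"
  proof
    assume H: "\<forall>l. l \<noteq> 0 \<longrightarrow> r l = Max (range r)"
    show "\<exists>k. (\<forall>l. l \<notin> {t *s lhat i | t i. i < s} \<longrightarrow> kdim C1 C2 K l = k)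
               \<and> (\<forall>i<s. kdim C1 C2 K (lhat i) = k)"
    proof (intro exI conjI allI impI)
      fix l assume "l \<notin> {t *s lhat i | t i. i < s}"
      then have "l \<noteq> 0" using s0 by (metis (mono_tags, lifting) mem_Collect_eq vector_smult_lzero)
      then show "kdim C1 C2 K l = kdim C1 C2 K e"
        using H e part1 unfolding r_def brank_def by metis
    next
      fix i assume "i < s"
      then have "lhat i \<noteq> 0" using lhat_nz by blast
      then show "kdim C1 C2 K (lhat i) = kdim C1 C2 K e"
        using H e part1 unfolding r_def brank_def by metis
    qed
  next
    assume "\<exists>k. (\<forall>l. l \<notin> {t *s lhat i | t i. i < s} \<longrightarrow> kdim C1 C2 K l = k)
               \<and> (\<forall>i<s. kdim C1 C2 K (lhat i) = k)"
    then obtain k where k1: "\<forall>l. l \<notin> {t *s lhat i | t i. i < s} \<longrightarrow> kdim C1 C2 K l = k"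
      and k2: "\<forall>i<s. kdim C1 C2 K (lhat i) = k" by blast
    have kall: "kdim C1 C2 K l = k" if "l \<noteq> 0" for l
    proof (cases "l \<in> {t *s lhat i | t i. i < s}")
      case True
      then obtain t i where ti: "i < s" "l = t *s lhat i" by blast
      with that have "t \<noteq> 0" by auto
      then show ?thesis using kscale ti k2 by simp
    next
      case False then show ?thesis using k1 by blast
    qed
    have rl: "r l = CARD('m) - k" if "l \<noteq> 0" for l using rk[OF that] kall[OF that] by simp
    have "range r \<subseteq> {0, CARD('m) - k}"
    proof
      fix y assume "y \<in> range r"
      then obtain l where "y = r l" by blast
      then show "y \<in> {0, CARD('m) - k}" using rl r0 by (cases "l = 0") auto
    qed
    then have "Max (range r) = CARD('m) - k"
    proof (intro Max_eqI)
      show "finite (range r)" using \<open>range r \<subseteq> _\<close> finite_subset by blast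
      show "y \<le> CARD('m) - k" if "y \<in> range r" for y using that \<open>range r \<subseteq> _\<close> by auto
      show "CARD('m) - k \<in> range r" using rl[OF e] by (metis rangeI)
    qed
    then show "\<forall>l. l \<noteq> 0 \<longrightarrow> r l = Max (range r)" using rl by simp
  qed
  show ?thesis using part1 part2 unfolding r_def by blast
qed

end
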